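(* Let $S$ be an inverse semigroup that is a separately Scott-continuous mirror semigroup, with semilattice of idempotents $\Sigma$. Then for all $s,t\in S$, $s \ll t$ if and only if $s\leqslant t$ and $\sigma(s) \prec\!\!\!\prec \sigma(t)$.
   Context: An inverse semigroup is a semigroup $S$ in which every $s$ has a unique $s^*$ with $ss^*s=s$ and $s^*ss^*=s^*$. $\Sigma=\Sigma(S)$ is the set of idempotents. The intrinsic order is $s\leqslant t$ iff $s=t\epsilon$ for some idempotent $\epsilon$. A subset is directed if nonempty and any two elements have an upper bound in it. $S$ is a mirror semigroup if every directed subset of $\Sigma$ having a supremum in $(\Sigma,\leqslant)$ also has a supremum in $(S,\leqslant)$. $S$ is separately Scott-continuous if for every directed $D\subseteq S$ with a supremum $\bigvee D$ in $S$ and every $s\in S$, $\bigvee(Ds)$ exists in $S$ and equals $(\bigvee D)s$. The source map is $\sigma(s)=s^*s$. In a poset, $x$ is way-below $y$ if for every directed subset $D$ that has a supremum with $y\leqslant \sup D$, there is $d\in D$ with $x\leqslant d$. $\ll$ denotes the way-below relation of the poset $(S,\leqslant)$ and $\prec\!\!\!\prec$ the way-below relation of the poset $(\Sigma,\leqslant)$. *)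

theory Defs
  imports Main
begin

definition inverse_semigroup :: "('a::semigroup_mult) itself \<Rightarrow> bool" where
  "inverse_semigroup _ \<longleftrightarrow>
     (\<forall>s::'a. \<exists>!u. s * u * s = s \<and> u * s * u = u)"

definition istar :: "'a::semigroup_mult \<Rightarrow> 'a" where
  "istar s = (THE u. s * u * s = s \<and> u * s * u = u)"

definition idems :: "'a::semigroup_mult set" where
  "idems = {e. e * e = e}"

definition ileq :: "'a::semigroup_mult \<Rightarrow> 'a \<Rightarrow> bool" where
  "ileq s t \<longleftrightarrow> (\<exists>e\<in>idems. s = t * e)"

definition src :: "'a::semigroup_mult \<Rightarrow> 'a" where
  "src s = istar s * s"

definition directed_in :: "('a \<Rightarrow> 'a \<Rightarrow> bool) \<Rightarrow> 'a set \<Rightarrow> 'a set \<Rightarrow> bool" where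
  "directed_in le P D \<longleftrightarrow> D \<subseteq> P \<and> D \<noteq> {} \<and>
     (\<forall>x\<in>D. \<forall>y\<in>D. \<exists>z\<in>D. le x z \<and> le y z)"

definition is_sup_in :: "('a \<Rightarrow> 'a \<Rightarrow> bool) \<Rightarrow> 'a set \<Rightarrow> 'a set \<Rightarrow> 'a \<Rightarrow> bool" where
  "is_sup_in le P D x \<longleftrightarrow> x \<in> P \<and> (\<forall>d\<in>D. le d x) \<and>
     (\<forall>y\<in>P. (\<forall>d\<in>D. le d y) \<longrightarrow> le x y)"

definition has_sup_in :: "('a \<Rightarrow> 'a \<Rightarrow> bool) \<Rightarrow> 'a set \<Rightarrow> 'a set \<Rightarrow> bool" where
  "has_sup_in le P D \<longleftrightarrow> (\<exists>x. is_sup_in le P D x)"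

definition way_below_in :: "('a \<Rightarrow> 'a \<Rightarrow> bool) \<Rightarrow> 'a set \<Rightarrow> 'a \<Rightarrow> 'a \<Rightarrow> bool" where
  "way_below_in le P x y \<longleftrightarrow>
     (\<forall>D z. directed_in le P D \<longrightarrow> is_sup_in le P D z \<longrightarrow> le y z \<longrightarrow>
        (\<exists>d\<in>D. le x d))"

definition mirror_semigroup :: "('a::semigroup_mult) itself \<Rightarrow> bool" where
  "mirror_semigroup _ \<longleftrightarrow>
     (\<forall>D::'a set. directed_in ileq idems D \<longrightarrow> has_sup_in ileq idems D \<longrightarrow>
        has_sup_in ileq UNIV D)"

definition sep_scott_cont :: "('a::semigroup_mult) itself \<Rightarrow> bool" where
  "sep_scott_cont _ \<longleftrightarrow>
     (\<forall>(D::'a set) x s. directed_in ileq UNIV D \<longrightarrow> is_sup_in ileq UNIV D x \<longrightarrow>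
        is_sup_in ileq UNIV ((\<lambda>d. d * s) ` D) (x * s))"

end

theory Submission
  imports Defs
begin

context
  assumes I: "inverse_semigroup TYPE('a::semigroup_mult)"
begin

lemma ex1: "\<exists>!u. (s::'a) * u * s = s \<and> u * s * u = u"
  using I unfolding inverse_semigroup_def by blast

lemma star_ax: "(s::'a) * istar s * s = s \<and> istar s * s * istar s = istar s"
  unfolding istar_def by (rule theI'[OF ex1])

lemma star_ax1: "(s::'a) * (istar s * s) = s" "(s::'a) * (istar s * (s * z)) = s * z"
  using star_ax[of s] by (simp_all add: mult.assoc[symmetric])

lemma star_ax2: "istar (s::'a) * (s * istar s) = istar s"
   "istar (s::'a) * (s * (istar s * z)) = istar s * z"
  using star_ax[of s] by (simp_all add: mult.assoc[symmetric])

lemma star_unique: "(s::'a) * u * s = s \<Longrightarrow> u * s * u = u \<Longrightarrow> istar s = u"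
  unfolding istar_def by (rule the1_equality[OF ex1]) simp

lemma star_star[simp]: "istar (istar (s::'a)) = s"
  by (rule star_unique) (use star_ax in auto)

lemma idem_star: "(e::'a) * e = e \<Longrightarrow> istar e = e"
  by (rule star_unique) auto

lemma idem_comm: assumes e: "(e::'a) * e = e" and f: "f * f = f" shows "e * f = f * e"
proof -
  have ee: "e * (e * z) = e * z" for z using e by (simp add: mult.assoc[symmetric])
  have ff: "f * (f * z) = f * z" for z using f by (simp add: mult.assoc[symmetric])
  have gen: "a * b * (a * b) = a * b" if a: "a * a = a" and b: "b * b = b" for a b :: 'a
  proof -
    have aa: "a * (a * z) = a * z" for z using a by (simp add: mult.assoc[symmetric])
    have bb: "b * (b * z) = b * z" for z using b by (simp add: mult.assoc[symmetric])
    define x where "x = istar (a * b)"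
    have x1: "a * (b * (x * (a * b))) = a * b" using star_ax[of "a*b"] unfolding x_def
      by (simp add: mult.assoc)
    have x2: "x * (a * (b * x)) = x" using star_ax[of "a*b"] unfolding x_def
      by (simp add: mult.assoc)
    have x2z: "x * (a * (b * (x * z))) = x * z" for z using x2 by (metis mult.assoc)
    have "istar (a*b) = b * x * a"
      by (rule star_unique) (simp_all add: mult.assoc aa bb x1 x2 x2z)
    hence y: "x = b * x * a" unfolding x_def by simp
    have "x * x = b * (x * (a * (b * x))) * a" using y by (metis mult.assoc)
    also have "... = x" using x2 y by (metis mult.assoc)
    finally have "x * x = x" .
    hence "istar x = x" by (rule idem_star)
    hence "a * b = x" unfolding x_def by (metis star_star)
    thus ?thesis using \<open>x * x = x\<close> by simp
  qed
  have ef: "e * f * (e * f) = e * f" by (rule gen[OF e f])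
  have fe: "f * e * (f * e) = f * e" by (rule gen[OF f e])
  have "istar (e * f) = f * e"
    apply (rule star_unique)
    using ef fe by (simp_all add: mult.assoc ee ff)
  moreover have "istar (e * f) = e * f" using ef by (rule idem_star)
  ultimately show ?thesis by simp
qed

lemma idem_assoc: "(e::'a) * e = e \<Longrightarrow> e * (e * z) = e * z"
  by (simp add: mult.assoc[symmetric])

lemma idem_comm3: "(e::'a) * e = e \<Longrightarrow> f * f = f \<Longrightarrow> e * (f * z) = f * (e * z)"
  by (metis idem_comm mult.assoc)

lemma src_idem: "src (s::'a) * src s = src s"
  unfolding src_def using star_ax2(2)[of s s] by (simp add: mult.assoc)

lemma star_mult: "istar ((s::'a) * t) = istar t * istar s"
proof (rule star_unique)
  have c: "src s * (t * istar t) = t * istar t * src s"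
    by (rule idem_comm) (use src_idem star_ax1 in \<open>simp_all add: mult.assoc src_def\<close>)
  show "s * t * (istar t * istar s) * (s * t) = s * t"
  proof -
    have "s * t * (istar t * istar s) * (s * t) = s * (t * istar t * src s) * t"
      by (simp add: mult.assoc src_def)
    also have "... = s * (src s * (t * istar t)) * t" using c by simp
    also have "... = s * t" by (simp add: mult.assoc src_def star_ax1)
    finally show ?thesis .
  qed
  have c2: "src t * (s * istar s) = s * istar s * src t"
    by (rule idem_comm) (use src_idem star_ax1 in \<open>simp_all add: mult.assoc src_def\<close>)
  have c2': "istar s * s * (t * istar t) = t * istar t * (istar s * s)"
    by (rule idem_comm) (use src_idem star_ax1 in \<open>simp_all add: mult.assoc src_def\<close>)
  show "istar t * istar s * (s * t) * (istar t * istar s) = istar t * istar s"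
  proof -
    have "istar t * istar s * (s * t) * (istar t * istar s) = istar t * (istar s * s * (t * istar t)) * istar s"
      by (simp add: mult.assoc)
    also have "... = istar t * (t * istar t * (istar s * s)) * istar s" using c2' by simp
    also have "... = istar t * istar s" by (simp add: mult.assoc star_ax2)
    finally show ?thesis .
  qed
qed

lemma ileq_src: assumes "ileq (a::'a) b" shows "a = b * src a" "src a = src b * src a"
proof -
  obtain e where e: "e * e = e" "a = b * e" using assms unfolding ileq_def idems_def by auto
  have "istar a = e * istar b" using e star_mult idem_star by simp
  moreover have "e * (istar b * (b * e)) = istar b * (b * (e * e))"
    using idem_comm3[OF e(1) src_idem[unfolded src_def]] by (simp add: mult.assoc)
  ultimately have sa: "src a = src b * e" using e unfolding src_def
    by (simp add: mult.assoc)
  show "a = b * src a" using sa e by (simp add: src_def mult.assoc star_ax1)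
  show "src a = src b * src a" using sa src_idem by (simp add: mult.assoc[symmetric])
qed

lemma ileq_iff: "ileq (a::'a) b \<longleftrightarrow> a = b * src a"
  using ileq_src(1) src_idem unfolding ileq_def idems_def by blast

lemma ileq_refl: "ileq (a::'a) a"
  using ileq_iff star_ax1 src_def by metis

lemma ileq_trans: "ileq (a::'a) b \<Longrightarrow> ileq b c \<Longrightarrow> ileq a c"
proof -
  assume "ileq a b" "ileq b c"
  then obtain e f where ef: "e * e = e" "a = b * e" "f * f = f" "b = c * f"
    unfolding ileq_def idems_def by auto
  moreover have "f * e * (f * e) = f * e"
  proof -
    have "f * e * (f * e) = f * (e * f) * e" by (simp add: mult.assoc)
    also have "... = f * (f * e) * e" using idem_comm[of e f] ef by simp
    also have "... = f * e" using ef by (simp add: mult.assoc idem_assoc)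
    finally show ?thesis .
  qed
  ultimately show ?thesis unfolding ileq_def idems_def
    by (intro bexI[of _ "f*e"]) (auto simp: mult.assoc)
qed

lemma src_mono: "ileq (a::'a) b \<Longrightarrow> ileq (src a) (src b)"
  using ileq_src(2) src_idem unfolding ileq_def idems_def by blast

lemma below_idem: assumes "ileq (a::'a) e" "e * e = e" shows "a * a = a" "e * a = a"
proof -
  obtain f where f: "f * f = f" "a = e * f" using assms unfolding ileq_def idems_def by auto
  have "a * a = e * (f * e) * f" using f by (simp add: mult.assoc)
  also have "... = e * (e * f) * f" using idem_comm[OF f(1) assms(2)] by simp
  also have "... = a" using f assms(2) by (simp add: mult.assoc idem_assoc)
  finally show "a * a = a" .
  show "e * a = a" using f assms(2) by (simp add: idem_assoc)
qed

lemma ileq_mult_right: assumes "ileq (a::'a) b" shows "ileq (a * u) (b * u)"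
proof -
  obtain e where e: "e * e = e" "a = b * e" using assms unfolding ileq_def idems_def by auto
  have i: "istar u * e * u * (istar u * e * u) = istar u * e * u"
  proof -
    have "istar u * e * u * (istar u * e * u) = istar u * (e * (u * istar u * e)) * u"
      by (simp add: mult.assoc)
    also have "... = istar u * (u * istar u * e) * u"
    proof -
      have c: "e * (u * istar u) = u * istar u * e"
        by (rule idem_comm[OF e(1)]) (simp add: mult.assoc star_ax1)
      have "e * (u * istar u * e) = (e * (u * istar u)) * e" by (simp add: mult.assoc)
      also have "... = u * istar u * e * e" using c by simp
      also have "... = u * istar u * e" using e(1) by (simp add: mult.assoc)
      finally show ?thesis by simp
    qed
    also have "... = istar u * e * u" by (simp add: mult.assoc star_ax2)
    finally show ?thesis .
  qed
  have "e * (u * istar u) = u * istar u * e"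
    by (rule idem_comm[OF e(1)]) (simp add: mult.assoc star_ax1)
  hence "a * u = b * u * (istar u * e * u)"
  proof -
    assume c: "e * (u * istar u) = u * istar u * e"
    have "b * u * (istar u * e * u) = b * (u * istar u * e) * u" by (simp add: mult.assoc)
    also have "... = b * (e * (u * istar u)) * u" using c by simp
    also have "... = a * u" using e by (simp add: mult.assoc star_ax1)
    finally show ?thesis by simp
  qed
  thus ?thesis using i unfolding ileq_def idems_def by blast
qed

lemma ileq_star: assumes "ileq (a::'a) b" shows "ileq (istar a) (istar b)"
proof -
  obtain e where e: "e * e = e" "a = b * e" using assms unfolding ileq_def idems_def by auto
  have sa: "istar a = e * istar b" using e star_mult idem_star by simp
  have i: "b * e * istar b * (b * e * istar b) = b * e * istar b"
    using e(1) idem_comm3[OF e(1) src_idem[unfolded src_def]]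
    by (simp add: mult.assoc star_ax1 idem_assoc)
  have "istar b * (b * e * istar b) = e * istar b"
    using idem_comm3[OF e(1) src_idem[unfolded src_def], symmetric] by (simp add: mult.assoc star_ax2)
  thus ?thesis using sa i unfolding ileq_def idems_def by (intro bexI[of _ "b * e * istar b"]) auto
qed

lemma ileq_star_iff: "ileq (istar (a::'a)) (istar b) \<longleftrightarrow> ileq a b"
  using ileq_star star_star by metis

lemma star_directed: "directed_in ileq UNIV (D::'a set) \<Longrightarrow> directed_in ileq UNIV (istar ` D)"
  unfolding directed_in_def by (auto simp: ileq_star_iff)

lemma star_sup: assumes "is_sup_in ileq UNIV (D::'a set) x"
  shows "is_sup_in ileq UNIV (istar ` D) (istar x)"
  using assms unfolding is_sup_in_def
  by (auto simp: ileq_star) (metis ileq_star_iff star_star)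

lemma left_cont:
  assumes sc: "sep_scott_cont TYPE('a)" and d: "directed_in ileq UNIV (D::'a set)"
    and x: "is_sup_in ileq UNIV D x"
  shows "is_sup_in ileq UNIV ((\<lambda>d. v * d) ` D) (v * x)"
proof -
  have "is_sup_in ileq UNIV ((\<lambda>d. d * istar v) ` (istar ` D)) (istar x * istar v)"
    using sc star_directed[OF d] star_sup[OF x] unfolding sep_scott_cont_def by blast
  from star_sup[OF this]
  have "is_sup_in ileq UNIV (istar ` (\<lambda>d. d * istar v) ` (istar ` D)) (v * x)"
    by (simp add: star_mult)
  moreover have "istar ` (\<lambda>d. d * istar v) ` (istar ` D) = (\<lambda>d. v * d) ` D"
    by (simp add: image_image star_mult)
  ultimately show ?thesis by simp
qed

lemma src_prod_idem: assumes d: "(d::'a) * d = d" shows "src (t * d) = src t * d"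
proof -
  have "src (t * d) = d * (istar t * (t * d))"
    unfolding src_def using star_mult[of t d] idem_star[OF d] by (simp add: mult.assoc)
  also have "... = istar t * (t * (d * d))"
    using idem_comm3[OF d src_idem[unfolded src_def], of t d] by (simp add: mult.assoc)
  finally show ?thesis using d by (simp add: src_def mult.assoc)
qed

lemma ileq_mult_left: "ileq (a::'a) b \<Longrightarrow> ileq (u * a) (u * b)"
  using ileq_mult_right[of "istar a" "istar b" "istar u"]
  by (simp add: ileq_star star_mult[symmetric] ileq_star_iff)

end

theorem lemma4p4:
  fixes s t :: "'a::semigroup_mult"
  assumes "inverse_semigroup TYPE('a)"
    and "mirror_semigroup TYPE('a)"
    and "sep_scott_cont TYPE('a)"
  shows "way_below_in ileq UNIV s t \<longleftrightarrow>
           (ileq s t \<and> way_below_in ileq idems (src s) (src t))"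
proof
  note I = assms(1)
  assume wb: "way_below_in ileq UNIV s t"
  have st: "ileq s t"
    using wb[unfolded way_below_in_def, rule_format, of "{t}" t]
    by (auto simp: directed_in_def is_sup_in_def ileq_refl[OF I])
  have "way_below_in ileq idems (src s) (src t)"
    unfolding way_below_in_def
  proof (intro allI impI)
    fix D z
    assume dD: "directed_in ileq idems D" and zs: "is_sup_in ileq idems D z"
      and tz: "ileq (src t) z"
    from assms(2) dD zs obtain x where x: "is_sup_in ileq UNIV D x"
      unfolding mirror_semigroup_def has_sup_in_def by blast
    have zi: "z * z = z" using zs unfolding is_sup_in_def idems_def by auto
    have xz: "ileq x z" using x zs unfolding is_sup_in_def by auto
    have xi: "x * x = x" using below_idem(1)[OF I xz zi] .
    have zx: "ileq z x" using x zs xi unfolding is_sup_in_def idems_def by auto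
    have tx: "ileq (src t) x" using ileq_trans[OF I tz zx] .
    have dU: "directed_in ileq UNIV D" using dD unfolding directed_in_def by auto
    have sup: "is_sup_in ileq UNIV ((\<lambda>d. t * d) ` D) (t * x)"
      by (rule left_cont[OF I assms(3) dU x])
    have "x * src t = src t" using below_idem(2)[OF I tx xi] .
    hence "t = t * x * src t" by (simp add: mult.assoc src_def star_ax1[OF I])
    hence ttx: "ileq t (t * x)" using src_idem[OF I, of t] unfolding ileq_def idems_def by blast
    have "directed_in ileq UNIV ((\<lambda>d. t * d) ` D)"
      using dU unfolding directed_in_def
    proof (intro conjI ballI)
      show "(*) t ` D \<subseteq> UNIV" by simp
      show "(*) t ` D \<noteq> {}" using dU unfolding directed_in_def by auto
    next
      fix a b assume "a \<in> (*) t ` D" "b \<in> (*) t ` D"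
      then obtain a' b' where "a' \<in> D" "b' \<in> D" "a = t * a'" "b = t * b'" by auto
      then obtain c where "c \<in> D" "ileq a' c" "ileq b' c" using dU unfolding directed_in_def by blast
      moreover have "ileq (t * a') (t * c)" "ileq (t * b') (t * c)"
        using calculation ileq_mult_left[OF I] by auto
      ultimately show "\<exists>z\<in>(*) t ` D. ileq a z \<and> ileq b z" using \<open>a = _\<close> \<open>b = _\<close> by blast
    qed
    then obtain e where e: "e \<in> D" "ileq s (t * e)"
      using wb sup ttx unfolding way_below_in_def by blast
    have ei: "e * e = e" using e dD unfolding directed_in_def idems_def by auto
    have "ileq (src s) (src (t * e))" using src_mono[OF I e(2)] .
    moreover have "src (t * e) = src t * e" using src_prod_idem[OF I ei] .
    moreover have "ileq (src t * e) e" unfolding ileq_def idems_def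
      using ei idem_comm[OF I ei src_idem[OF I, of t]] src_idem[OF I, of t]
      by (intro bexI[of _ "src t"]) auto
    ultimately show "\<exists>d\<in>D. ileq (src s) d" using e(1) ileq_trans[OF I] by metis
  qed
  with st show "ileq s t \<and> way_below_in ileq idems (src s) (src t)" by blast
next
  note I = assms(1)
  assume "ileq s t \<and> way_below_in ileq idems (src s) (src t)"
  hence st: "ileq s t" and wb: "way_below_in ileq idems (src s) (src t)" by auto
  show "way_below_in ileq UNIV s t"
    unfolding way_below_in_def
  proof (intro allI impI)
    fix D z
    assume dD: "directed_in ileq UNIV D" and zs: "is_sup_in ileq UNIV D z" and tz: "ileq t z"
    have srcD: "src ` D = (\<lambda>d. istar z * d) ` D"
    proof (rule image_cong[OF refl])
      fix d assume "d \<in> D"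
      hence dz: "ileq d z" using zs unfolding is_sup_in_def by auto
      have "istar z * d = istar z * (z * src d)" using ileq_src(1)[OF I dz] by simp
      also have "... = src z * src d" by (simp add: src_def mult.assoc)
      also have "... = src d" using ileq_src(2)[OF I dz] by simp
      finally show "src d = istar z * d" by simp
    qed
    have "is_sup_in ileq UNIV (src ` D) (src z)"
      using left_cont[OF I assms(3) dD zs, of "istar z"] srcD by (simp add: src_def)
    hence sup: "is_sup_in ileq idems (src ` D) (src z)"
      using src_idem[OF I, of z] unfolding is_sup_in_def idems_def by auto
    have dir: "directed_in ileq idems (src ` D)"
      using dD src_idem[OF I] unfolding directed_in_def idems_def
      by (auto intro: src_mono[OF I]) (metis src_mono[OF I])
    have "ileq (src t) (src z)" using src_mono[OF I tz] .
    then obtain d where d: "d \<in> D" "ileq (src s) (src d)"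
      using wb dir sup unfolding way_below_in_def by blast
    have dz: "ileq d z" using d zs unfolding is_sup_in_def by auto
    have "s = t * src s" using ileq_src(1)[OF I st] .
    also have "... = z * (src t * src s)" using ileq_src(1)[OF I tz] by (metis mult.assoc)
    also have "... = z * src s" using ileq_src(2)[OF I st] by simp
    also have "... = z * (src d * src s)" using d(2) below_idem(2)[OF I _ src_idem[OF I]] by metis
    also have "... = d * src s" using ileq_src(1)[OF I dz] by (metis mult.assoc)
    finally have "ileq s d" using src_idem[OF I, of s] unfolding ileq_def idems_def by blast
    thus "\<exists>d\<in>D. ileq s d" using d(1) by blast
  qed
qed

end
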